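(* For $q\in(0,1)$, let $(X_q,d_q)$ be the compact metric space with $X_q=\{0\}\cup\{q^{2k}:k\in\mathbb N_0\}$ and $d_q$ as defined in the context. Then the map $q\mapsto (X_q,d_q)$ from $(0,1)$ to compact metric spaces is continuous with respect to the Gromov–Hausdorff distance, and $(X_q,d_q)$ converges in Gromov–Hausdorff distance to the interval $[-\pi/2,\pi/2]$ with its standard Euclidean metric as $q\to 1^-$.
   Context: For $q\in(0,1)$ define $\rho_q:[-1,\infty)\to\mathbb R$ by $\rho_q(x)=\dfrac{\sqrt{1-q^{2(x+1)}}}{(1-q^2)q^x}$, and define $d_q:X_q\times X_q\to[0,\infty)$ by $d_q(x,x)=0$; $d_q(q^{2n},q^{2m})=\sum_{k=\min\{m,n\}}^{\max\{m,n\}-1}1/\rho_q(k)$ for $n\ne m$; and $d_q(q^{2n},0)=d_q(0,q^{2n})=\sum_{k=n}^\infty 1/\rho_q(k)$. The Gromov–Hausdorff distance between compact metric spaces $X,Y$ is the infimum of Hausdorff distances between isometric images of $X$ and $Y$ in a common metric space $Z$, over all such $Z$ and isometric embeddings. *)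

theory Defs
  imports "HOL-Analysis.Analysis"
begin

definition rho :: "real \<Rightarrow> real \<Rightarrow> real" where
  "rho q x = sqrt (1 - q powr (2 * (x + 1))) / ((1 - q\<^sup>2) * q powr x)"

definition Xq :: "real \<Rightarrow> real set" where
  "Xq q = insert 0 (range (\<lambda>k::nat. q ^ (2 * k)))"

definition qidx :: "real \<Rightarrow> real \<Rightarrow> nat" where
  "qidx q x = (THE n. x = q ^ (2 * n))"

text \<open>The metric d_q on X_q (values outside X_q are irrelevant).\<close>
definition dq :: "real \<Rightarrow> real \<Rightarrow> real \<Rightarrow> real" where
  "dq q x y =
    (if x = y then 0
     else if y = 0 then (\<Sum>j. 1 / rho q (real (j + qidx q x)))
     else if x = 0 then (\<Sum>j. 1 / rho q (real (j + qidx q y)))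
     else (\<Sum>k = min (qidx q x) (qidx q y) ..< max (qidx q x) (qidx q y). 1 / rho q (real k)))"

definition metric_on :: "'a set \<Rightarrow> ('a \<Rightarrow> 'a \<Rightarrow> real) \<Rightarrow> bool" where
  "metric_on S d \<longleftrightarrow>
     (\<forall>x\<in>S. \<forall>y\<in>S. 0 \<le> d x y \<and> (d x y = 0 \<longleftrightarrow> x = y) \<and> d x y = d y x) \<and>
     (\<forall>x\<in>S. \<forall>y\<in>S. \<forall>z\<in>S. d x z \<le> d x y + d y z)"

definition hausdorff_d :: "('a \<Rightarrow> 'a \<Rightarrow> real) \<Rightarrow> 'a set \<Rightarrow> 'a set \<Rightarrow> real" where
  "hausdorff_d d A B =
     max (SUP a\<in>A. INF b\<in>B. d a b) (SUP b\<in>B. INF a\<in>A. d a b)"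

definition admissible_metric ::
  "'a set \<Rightarrow> ('a \<Rightarrow> 'a \<Rightarrow> real) \<Rightarrow> 'b set \<Rightarrow> ('b \<Rightarrow> 'b \<Rightarrow> real) \<Rightarrow> ('a + 'b \<Rightarrow> 'a + 'b \<Rightarrow> real) \<Rightarrow> bool" where
  "admissible_metric X dX Y dY d \<longleftrightarrow>
     metric_on (Inl ` X \<union> Inr ` Y) d \<and>
     (\<forall>x\<in>X. \<forall>x'\<in>X. d (Inl x) (Inl x') = dX x x') \<and>
     (\<forall>y\<in>Y. \<forall>y'\<in>Y. d (Inr y) (Inr y') = dY y y')"

definition GH_dist ::
  "'a set \<Rightarrow> ('a \<Rightarrow> 'a \<Rightarrow> real) \<Rightarrow> 'b set \<Rightarrow> ('b \<Rightarrow> 'b \<Rightarrow> real) \<Rightarrow> real" where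
  "GH_dist X dX Y dY =
     Inf {hausdorff_d d (Inl ` X) (Inr ` Y) | d. admissible_metric X dX Y dY d}"

end

theory Submission
  imports Defs
begin


definition aa :: "real \<Rightarrow> nat \<Rightarrow> real" where
  "aa q k = 1 / rho q (real k)"

definition TT :: "real \<Rightarrow> nat \<Rightarrow> real" where
  "TT q n = (\<Sum>j. aa q (j + n))"

lemma aa_eq:
  assumes "0 < q" "q < 1"
  shows "aa q k = (1 - q\<^sup>2) * q ^ k / sqrt (1 - q ^ (2 * k + 2))"
proof -
  have e1: "q powr (2 * (real k + 1)) = q ^ (2 * k + 2)"
  proof -
    have "q powr (2*(real k+1)) = q powr real (2*k+2)"
      by (rule arg_cong[where f="\<lambda>x. q powr x"]) simp
    also have "\<dots> = q^(2*k+2)" by (rule powr_realpow[OF assms(1)])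
    finally show ?thesis .
  qed
  have e2: "q powr (real k) = q ^ k" using powr_realpow[OF assms(1)] by simp
  show ?thesis unfolding aa_def rho_def e1 e2 by simp
qed

lemma sq_pos_aux:
  fixes q :: real
  assumes "0 < q" "q < 1"
  shows "0 < 1 - q ^ (2 * k + 2)" "1 - q\<^sup>2 \<le> 1 - q ^ (2 * k + 2)"
proof -
  have "q ^ (2 * k + 2) < 1" using assms power_Suc_less_one[of q "2*k+1"] by simp
  then show "0 < 1 - q ^ (2 * k + 2)" by simp
  have "q ^ (2 * k + 2) = q\<^sup>2 * q ^ (2*k)" by (simp add: power_add power2_eq_square mult.commute)
  also have "\<dots> \<le> q\<^sup>2" using assms by (simp add: power_le_one mult_left_le)
  finally show "1 - q\<^sup>2 \<le> 1 - q ^ (2 * k + 2)" by simp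
qed

lemma aa_pos:
  assumes "0 < q" "q < 1"
  shows "0 < aa q k"
proof -
  have "q\<^sup>2 < 1" using assms by (simp add: power_less_one_iff)
  then show ?thesis using aa_eq[OF assms] sq_pos_aux[OF assms, of k] assms by simp
qed

lemma aa_le:
  assumes "0 < q" "q < 1"
  shows "aa q k \<le> sqrt (1 - q\<^sup>2) * q ^ k"
proof -
  have q2: "0 < 1 - q\<^sup>2" using assms by (simp add: power_less_one_iff)
  have s: "sqrt (1 - q\<^sup>2) \<le> sqrt (1 - q ^ (2 * k + 2))" 
    using sq_pos_aux[OF assms, of k] by simp
  have sp: "0 < sqrt (1 - q\<^sup>2)" using q2 by simp
  have "(1 - q\<^sup>2) * q ^ k / sqrt (1 - q ^ (2 * k + 2)) \<le> (1 - q\<^sup>2) * q ^ k / sqrt (1 - q\<^sup>2)"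
    using q2 assms s sp by (intro divide_left_mono) auto
  also have "\<dots> = ((1 - q\<^sup>2) / sqrt (1 - q\<^sup>2)) * q ^ k" by simp
  also have "(1 - q\<^sup>2) / sqrt (1 - q\<^sup>2) = sqrt (1 - q\<^sup>2)"
    using q2 by (intro real_div_sqrt) simp
  finally have "(1 - q\<^sup>2) * q ^ k / sqrt (1 - q ^ (2 * k + 2)) \<le> sqrt (1 - q\<^sup>2) * q ^ k" .
  then show ?thesis using aa_eq[OF assms] by simp
qed

lemma aa_le2:
  assumes "0 < q" "q < 1"
  shows "aa q k \<le> q ^ k" "aa q k \<le> sqrt (1 - q\<^sup>2)"
proof -
  have a: "sqrt (1 - q\<^sup>2) \<le> 1" using assms by simp
  have b: "q ^ k \<le> 1" "0 \<le> q^k" using assms by (simp_all add: power_le_one)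
  have "sqrt (1 - q\<^sup>2) * q ^ k \<le> 1 * q ^ k" by (rule mult_right_mono[OF a b(2)])
  then show "aa q k \<le> q ^ k" using aa_le[OF assms, of k] by simp
  have "sqrt (1 - q\<^sup>2) * q ^ k \<le> sqrt (1 - q\<^sup>2) * 1"
    using assms by (intro mult_left_mono[OF b(1)]) (simp add: power_le_one)
  then show "aa q k \<le> sqrt (1 - q\<^sup>2)" using aa_le[OF assms, of k] by simp
qed

lemma aa_shift_summable:
  assumes "0 < q" "q < 1"
  shows "summable (\<lambda>j. aa q (j + n))"
proof (rule summable_comparison_test'[where g = "\<lambda>j. q ^ j * q ^ n"])
  have "summable (\<lambda>j. q ^ j)" using assms by (intro summable_geometric) simp
  then show "summable (\<lambda>j. q ^ j * q ^ n)" by (rule summable_mult2)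
  fix j
  have "0 < aa q (j + n)" by (rule aa_pos[OF assms])
  moreover have "aa q (j + n) \<le> q ^ (j + n)" by (rule aa_le2(1)[OF assms])
  ultimately show "norm (aa q (j + n)) \<le> q ^ j * q ^ n" by (simp add: power_add)
qed

lemma TT_bound:
  assumes "0 < q" "q < 1"
  shows "TT q n \<le> q ^ n / (1 - q)"
proof -
  have sg: "summable (\<lambda>j. q ^ j)" using assms by (intro summable_geometric) simp
  have "TT q n \<le> (\<Sum>j. q ^ j * q ^ n)"
    unfolding TT_def
  proof (rule suminf_le)
    fix j show "aa q (j + n) \<le> q ^ j * q ^ n"
      using aa_le2(1)[OF assms, of "j+n"] by (simp add: power_add)
  qed (use aa_shift_summable[OF assms] summable_mult2[OF sg] in auto)
  also have "\<dots> = (\<Sum>j. q ^ j) * q ^ n" by (rule suminf_mult2[OF sg, symmetric])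
  also have "\<dots> = q ^ n / (1 - q)"
    using assms by (simp add: suminf_geometric)
  finally show ?thesis .
qed

lemma TT_pos:
  assumes "0 < q" "q < 1"
  shows "0 < TT q n"
  unfolding TT_def using aa_shift_summable[OF assms] aa_pos[OF assms]
  by (intro suminf_pos) auto

lemma TT_Suc:
  assumes "0 < q" "q < 1"
  shows "TT q n = aa q n + TT q (Suc n)"
proof -
  have "(\<Sum>j. aa q (Suc j + n)) = TT q n - aa q (0 + n)"
    unfolding TT_def by (rule suminf_split_head[OF aa_shift_summable[OF assms]])
  then show ?thesis unfolding TT_def by simp
qed

lemma TT_split:
  assumes "0 < q" "q < 1" "n \<le> m"
  shows "TT q n = (\<Sum>k=n..<m. aa q k) + TT q m"
  using assms(3)
proof (induction m)
  case 0 then show ?case by simp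
next
  case (Suc m)
  show ?case
  proof (cases "n = Suc m")
    case True then show ?thesis by simp
  next
    case False
    then have "n \<le> m" using Suc by simp
    then show ?thesis using Suc TT_Suc[OF assms(1,2), of m] by simp
  qed
qed

lemma TT_mono:
  assumes "0 < q" "q < 1" "n \<le> m"
  shows "TT q m \<le> TT q n"
proof -
  have "0 \<le> (\<Sum>k=n..<m. aa q k)" using aa_pos[OF assms(1,2)] by (intro sum_nonneg) (simp add: less_imp_le)
  then show ?thesis using TT_split[OF assms] by linarith
qed

lemma TT_strict:
  assumes "0 < q" "q < 1" "n < m"
  shows "TT q m < TT q n"
proof -
  have "TT q m \<le> TT q (Suc n)" using TT_mono[OF assms(1,2)] assms by simp
  then show ?thesis using TT_Suc[OF assms(1,2), of n] aa_pos[OF assms(1,2), of n] by simp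
qed



lemma arcsin_mvt:
  fixes a b :: real
  assumes "0 \<le> a" "a < b" "b \<le> 1"
  obtains z where "a < z" "z < b" "arcsin b - arcsin a = (b - a) / sqrt (1 - z\<^sup>2)"
proof -
  have c: "continuous_on {a..b} arcsin"
    using continuous_on_subset[OF continuous_on_arcsin'] assms by auto
  have d: "arcsin differentiable (at x)" if "a < x" "x < b" for x
    using DERIV_arcsin[of x] that assms by (auto simp: real_differentiable_def)
  obtain l z where z: "a < z" "z < b" "DERIV arcsin z :> l" "arcsin b - arcsin a = (b - a) * l"
    using MVT[OF assms(2) c d] by blast
  have "DERIV arcsin z :> inverse (sqrt (1 - z\<^sup>2))"
    using z assms by (intro DERIV_arcsin) auto
  then have "l = inverse (sqrt (1 - z\<^sup>2))" using z(3) by (rule DERIV_unique[rotated])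
  then show ?thesis using that z by (simp add: divide_inverse)
qed

lemma arcsin_lower:
  fixes a b :: real
  assumes "0 \<le> a" "a < b" "b \<le> 1"
  shows "(b - a) / sqrt (1 - a\<^sup>2) \<le> arcsin b - arcsin a"
proof -
  obtain z where z: "a < z" "z < b" "arcsin b - arcsin a = (b - a) / sqrt (1 - z\<^sup>2)"
    using arcsin_mvt[OF assms] .
  have "a\<^sup>2 < z\<^sup>2" using z assms by (intro power_strict_mono) auto
  moreover have "z\<^sup>2 < 1" using z assms by (simp add: abs_square_less_1)
  ultimately have "sqrt (1 - z\<^sup>2) \<le> sqrt (1 - a\<^sup>2)" "0 < sqrt (1 - z\<^sup>2)" by auto
  then have "(b - a) / sqrt (1 - a\<^sup>2) \<le> (b - a) / sqrt (1 - z\<^sup>2)"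
    using assms by (intro divide_left_mono) auto
  then show ?thesis using z by simp
qed

lemma arcsin_upper:
  fixes a b :: real
  assumes "0 \<le> a" "a < b" "b < 1"
  shows "arcsin b - arcsin a \<le> (b - a) / sqrt (1 - b\<^sup>2)"
proof -
  obtain z where z: "a < z" "z < b" "arcsin b - arcsin a = (b - a) / sqrt (1 - z\<^sup>2)"
    using arcsin_mvt[of a b] assms by auto
  have "z\<^sup>2 < b\<^sup>2" using z assms by (intro power_strict_mono) auto
  moreover have "b\<^sup>2 < 1" using assms by (simp add: abs_square_less_1)
  ultimately have "sqrt (1 - b\<^sup>2) \<le> sqrt (1 - z\<^sup>2)" "0 < sqrt (1 - b\<^sup>2)" by auto
  then have "(b - a) / sqrt (1 - z\<^sup>2) \<le> (b - a) / sqrt (1 - b\<^sup>2)"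
    using assms by (intro divide_left_mono) auto
  then show ?thesis using z by simp
qed

lemma aa_alt:
  assumes "0 < q" "q < 1"
  shows "aa q k = (1 + q) * ((q ^ k - q ^ Suc k) / sqrt (1 - (q ^ Suc k)\<^sup>2))"
proof -
  have "(q ^ Suc k)\<^sup>2 = q ^ (Suc k * 2)" by (simp only: power_mult)
  also have "Suc k * 2 = 2 * k + 2" by simp
  finally have "(q ^ Suc k)\<^sup>2 = q ^ (2 * k + 2)" .
  moreover have "(1 - q\<^sup>2) * q ^ k = (1 + q) * (q ^ k - q ^ Suc k)" by (simp add: algebra_simps power2_eq_square)
  ultimately show ?thesis using aa_eq[OF assms] by simp
qed

lemma aa_alt2:
  assumes "0 < q" "q < 1"
  shows "aa q k = (1 + q) / q * ((q ^ Suc k - q ^ Suc (Suc k)) / sqrt (1 - (q ^ Suc k)\<^sup>2))"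
proof -
  have "q ^ Suc k - q ^ Suc (Suc k) = q * (q ^ k - q ^ Suc k)" by (simp add: algebra_simps)
  then show ?thesis using aa_alt[OF assms, of k] assms by simp
qed

lemma pow_tendsto0: "0 < q \<Longrightarrow> q < (1::real) \<Longrightarrow> (\<lambda>n. arcsin (q ^ n)) \<longlonglongrightarrow> 0"
proof -
  assume "0 < q" "q < 1"
  then have "(\<lambda>n. q ^ n) \<longlonglongrightarrow> 0" by (intro LIMSEQ_power_zero) auto
  moreover have "isCont arcsin 0" by (rule isCont_arcsin) auto
  ultimately have "(\<lambda>n. arcsin (q ^ n)) \<longlonglongrightarrow> arcsin 0"
    by (rule isCont_tendsto_compose[rotated])
  then show ?thesis by simp
qed

lemma TT0_upper:
  assumes "0 < q" "q < 1"
  shows "TT q 0 \<le> (1 + q) * (pi / 2)"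
proof -
  have s: "(\<lambda>n. arcsin (q ^ n) - arcsin (q ^ Suc n)) sums (arcsin (q ^ 0) - 0)"
    by (rule telescope_sums'[OF pow_tendsto0[OF assms]])
  have s2: "(\<lambda>n. (1 + q) * (arcsin (q ^ n) - arcsin (q ^ Suc n))) sums ((1 + q) * (pi / 2))"
    using sums_mult[OF s, of "1+q"] by simp
  have le: "aa q n \<le> (1 + q) * (arcsin (q ^ n) - arcsin (q ^ Suc n))" for n
  proof -
    have "q ^ Suc n < q ^ n" using assms by (simp add: power_strict_decreasing)
    moreover have "q ^ n \<le> 1" using assms by (simp add: power_le_one)
    ultimately have "(q ^ n - q ^ Suc n) / sqrt (1 - (q ^ Suc n)\<^sup>2) \<le> arcsin (q ^ n) - arcsin (q ^ Suc n)"
      using assms by (intro arcsin_lower) auto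
    then have "(1 + q) * ((q ^ n - q ^ Suc n) / sqrt (1 - (q ^ Suc n)\<^sup>2)) \<le> (1 + q) * (arcsin (q ^ n) - arcsin (q ^ Suc n))"
      by (rule mult_left_mono) (use assms in simp)
    then show ?thesis unfolding aa_alt[OF assms, of n] .
  qed
  have "TT q 0 = (\<Sum>n. aa q n)" unfolding TT_def by simp
  also have "\<dots> \<le> (1 + q) * (pi / 2)"
  proof -
    have sa: "aa q sums (\<Sum>n. aa q n)" using aa_shift_summable[OF assms, of 0] by (simp add: summable_sums)
    show ?thesis by (rule sums_le[OF le sa s2])
  qed
  finally show ?thesis .
qed

lemma TT0_lower:
  assumes "0 < q" "q < 1"
  shows "(1 + q) / q * arcsin q \<le> TT q 0"
proof -
  have t: "(\<lambda>n. arcsin (q ^ Suc n)) \<longlonglongrightarrow> 0" using LIMSEQ_Suc[OF pow_tendsto0[OF assms]] .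
  have s: "(\<lambda>n. arcsin (q ^ Suc n) - arcsin (q ^ Suc (Suc n))) sums (arcsin (q ^ Suc 0) - 0)"
    by (rule telescope_sums'[OF t])
  have s2: "(\<lambda>n. (1 + q) / q * (arcsin (q ^ Suc n) - arcsin (q ^ Suc (Suc n)))) sums ((1 + q) / q * arcsin q)"
    using sums_mult[OF s, of "(1+q)/q"] by simp
  have le: "(1 + q) / q * (arcsin (q ^ Suc n) - arcsin (q ^ Suc (Suc n))) \<le> aa q n" for n
  proof -
    have "q ^ Suc (Suc n) < q ^ Suc n" using assms by (simp add: power_strict_decreasing)
    moreover have "q ^ Suc n < 1" using assms power_Suc_less_one[of q n] by simp
    ultimately have "arcsin (q ^ Suc n) - arcsin (q ^ Suc (Suc n)) \<le> (q ^ Suc n - q ^ Suc (Suc n)) / sqrt (1 - (q ^ Suc n)\<^sup>2)"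
      using assms by (intro arcsin_upper) auto
    then have "(1 + q) / q * (arcsin (q ^ Suc n) - arcsin (q ^ Suc (Suc n))) \<le> (1 + q) / q * ((q ^ Suc n - q ^ Suc (Suc n)) / sqrt (1 - (q ^ Suc n)\<^sup>2))"
      by (rule mult_left_mono) (use assms in simp)
    then show ?thesis unfolding aa_alt2[OF assms, of n] .
  qed
  have "(1 + q) / q * arcsin q \<le> (\<Sum>n. aa q n)"
  proof -
    have sa: "aa q sums (\<Sum>n. aa q n)" using aa_shift_summable[OF assms, of 0] by (simp add: summable_sums)
    show ?thesis by (rule sums_le[OF le s2 sa])
  qed
  also have "\<dots> = TT q 0" unfolding TT_def by simp
  finally show ?thesis .
qed

lemma TT0_limit: "((\<lambda>q. TT q 0) \<longlongrightarrow> pi) (at_left 1)"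
proof (rule tendsto_sandwich[where f = "\<lambda>q. (1 + q) / q * arcsin q" and h = "\<lambda>q. (1 + q) * (pi / 2)"])
  have ev: "eventually (\<lambda>q. 0 < q \<and> q < (1::real)) (at_left 1)"
    by (rule eventually_at_leftI[of "0"]) auto
  show "eventually (\<lambda>q. (1 + q) / q * arcsin q \<le> TT q 0) (at_left 1)"
    using ev by eventually_elim (use TT0_lower in auto)
  show "eventually (\<lambda>q. TT q 0 \<le> (1 + q) * (pi / 2)) (at_left 1)"
    using ev by eventually_elim (use TT0_upper in auto)
  have "((\<lambda>q::real. (1 + q) * (pi / 2)) \<longlongrightarrow> (1 + 1) * (pi / 2)) (at_left 1)"
    by (intro tendsto_intros)
  then show "((\<lambda>q::real. (1 + q) * (pi / 2)) \<longlongrightarrow> pi) (at_left 1)" by simp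
  have h: "\<forall>x\<in>{-1..1::real}. (arcsin \<longlongrightarrow> arcsin x) (at x within {-1..1})"
    using continuous_on_arcsin' unfolding continuous_on_def .
  have "(arcsin \<longlongrightarrow> arcsin 1) (at 1 within {-1..1})"
    by (rule bspec[OF h]) simp
  moreover have "at (1::real) within {-1..1} = at_left 1" by (rule at_within_Icc_at_left) simp
  ultimately have a: "(arcsin \<longlongrightarrow> pi / 2) (at_left 1)" by simp
  have "((\<lambda>q::real. (1 + q) / q * arcsin q) \<longlongrightarrow> (1 + 1) / 1 * (pi / 2)) (at_left 1)"
    by (intro tendsto_intros a) auto
  then show "((\<lambda>q::real. (1 + q) / q * arcsin q) \<longlongrightarrow> pi) (at_left 1)" by simp
qed



lemma GH_bound:
  fixes X :: "'a set" and Y :: "'b set" and f :: "'a \<Rightarrow> real" and g :: "'b \<Rightarrow> real"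
  assumes XY: "X \<noteq> {}" "Y \<noteq> {}"
  and dX: "\<And>x x'. x \<in> X \<Longrightarrow> x' \<in> X \<Longrightarrow> dX x x' = \<bar>f x - f x'\<bar>"
  and dY: "\<And>y y'. y \<in> Y \<Longrightarrow> y' \<in> Y \<Longrightarrow> dY y y' = \<bar>g y - g y'\<bar>"
  and inj: "inj_on f X" "inj_on g Y"
  and bd: "\<And>x. x \<in> X \<Longrightarrow> \<bar>f x\<bar> \<le> M"
  and c1: "\<And>x. x \<in> X \<Longrightarrow> \<exists>y\<in>Y. \<bar>f x - g y\<bar> \<le> h"
  and c2: "\<And>y. y \<in> Y \<Longrightarrow> \<exists>x\<in>X. \<bar>f x - g y\<bar> \<le> h"
  shows "0 \<le> GH_dist X dX Y dY \<and> GH_dist X dX Y dY \<le> h"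
proof -
  define pos where "pos u = (case u of Inl x \<Rightarrow> f x | Inr y \<Rightarrow> g y)" for u
  define D where "D \<delta> u v = \<bar>pos u - pos v\<bar> + (if isl u = isl v then 0 else \<delta>)" for \<delta> :: real and u v
  define S where "S = {hausdorff_d d (Inl ` X) (Inr ` Y) | d. admissible_metric X dX Y dY d}"
  define A where "A = (Inl ` X :: ('a + 'b) set)"
  define B where "B = (Inr ` Y :: ('a + 'b) set)"
  have adm: "admissible_metric X dX Y dY (D \<delta>)" if "\<delta> > 0" for \<delta>
  proof -
    have m1a: "u = v" if "D \<delta> u v = 0" "u \<in> A \<union> B" "v \<in> A \<union> B" for u v
    proof -
      have i: "isl u = isl v"
      proof (rule ccontr)
        assume "isl u \<noteq> isl v"
        then have "\<bar>pos u - pos v\<bar> + \<delta> = 0" using that(1) unfolding D_def by simp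
        then show False using \<open>\<delta> > 0\<close> by linarith
      qed
      then have p: "pos u = pos v" using that(1) unfolding D_def by simp
      show ?thesis
      proof (cases u)
        case (Inl x)
        then obtain x' where v: "v = Inl x'" using i by (cases v) auto
        have "x \<in> X" "x' \<in> X" using that(2,3) Inl v by (auto simp: A_def B_def)
        moreover have "f x = f x'" using p Inl v by (simp add: pos_def)
        ultimately show ?thesis using inj(1) Inl v by (simp add: inj_on_def)
      next
        case (Inr y)
        then obtain y' where v: "v = Inr y'" using i by (cases v) auto
        have "y \<in> Y" "y' \<in> Y" using that(2,3) Inr v by (auto simp: A_def B_def)
        moreover have "g y = g y'" using p Inr v by (simp add: pos_def)
        ultimately show ?thesis using inj(2) Inr v by (simp add: inj_on_def)
      qed
    qed
    have m1: "0 \<le> D \<delta> u v \<and> (D \<delta> u v = 0 \<longleftrightarrow> u = v) \<and> D \<delta> u v = D \<delta> v u"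
      if "u \<in> A \<union> B" "v \<in> A \<union> B" for u v
    proof (intro conjI)
      show "0 \<le> D \<delta> u v" using \<open>\<delta> > 0\<close> by (simp add: D_def)
      show "D \<delta> u v = 0 \<longleftrightarrow> u = v" using m1a[OF _ that] by (auto simp: D_def)
      show "D \<delta> u v = D \<delta> v u" by (simp add: D_def abs_minus_commute eq_commute)
    qed
    have m2: "D \<delta> u w \<le> D \<delta> u v + D \<delta> v w" for u v w
    proof -
      have "\<bar>pos u - pos w\<bar> \<le> \<bar>pos u - pos v\<bar> + \<bar>pos v - pos w\<bar>" by simp
      then show ?thesis using \<open>\<delta> > 0\<close> unfolding D_def by (auto split: if_splits)
    qed
    have r1: "D \<delta> (Inl x) (Inl x') = dX x x'" if "x \<in> X" "x' \<in> X" for x x'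
      using dX[OF that] by (simp add: D_def pos_def)
    have r2: "D \<delta> (Inr y) (Inr y') = dY y y'" if "y \<in> Y" "y' \<in> Y" for y y'
      using dY[OF that] by (simp add: D_def pos_def)
    have "metric_on (A \<union> B) (D \<delta>)" unfolding metric_on_def
      using m1 m2 by blast
    then show ?thesis unfolding admissible_metric_def A_def B_def using r1 r2 by blast
  qed
  have nonneg: "0 \<le> s" if "s \<in> S" for s
  proof -
    obtain d where s: "s = hausdorff_d d A B" and ad: "admissible_metric X dX Y dY d"
      using \<open>s \<in> S\<close> unfolding S_def A_def B_def by auto
    have met: "metric_on (A \<union> B) d" using ad unfolding admissible_metric_def A_def B_def by simp
    have M1: "\<forall>x\<in>A \<union> B. \<forall>y\<in>A \<union> B. 0 \<le> d x y \<and> (d x y = 0 \<longleftrightarrow> x = y) \<and> d x y = d y x"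
      using met unfolding metric_on_def by (rule conjunct1)
    have M2: "\<forall>x\<in>A \<union> B. \<forall>y\<in>A \<union> B. \<forall>z\<in>A \<union> B. d x z \<le> d x y + d y z"
      using met unfolding metric_on_def by (rule conjunct2)
    have dnn: "0 \<le> d u v" if "u \<in> A \<union> B" "v \<in> A \<union> B" for u v
      using bspec[OF bspec[OF M1 that(1)] that(2)] by (rule conjunct1)
    have tri: "d u w \<le> d u v + d v w" if "u \<in> A \<union> B" "v \<in> A \<union> B" "w \<in> A \<union> B" for u v w
      using bspec[OF bspec[OF bspec[OF M2 that(1)] that(2)] that(3)] .
    obtain x0 y0 where x0: "x0 \<in> X" and y0: "y0 \<in> Y" using XY by blast
    have bb: "bdd_below ((\<lambda>b. d a b) ` B)" if "a \<in> A" for a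
      using dnn that by (intro bdd_belowI[of _ 0]) auto
    have infnn: "0 \<le> (INF b\<in>B. d a b)" if "a \<in> A" for a
      using dnn that XY unfolding B_def by (intro cINF_greatest) auto
    have "bdd_above ((\<lambda>a. INF b\<in>B. d a b) ` A)"
    proof (rule bdd_aboveI[of _ "2 * M + d (Inl x0) (Inr y0)"])
      fix r assume "r \<in> (\<lambda>a. INF b\<in>B. d a b) ` A"
      then obtain x where x: "x \<in> X" and r: "r = (INF b\<in>B. d (Inl x) b)" unfolding A_def by auto
      have "r \<le> d (Inl x) (Inr y0)"
        unfolding r using bb[of "Inl x"] x y0 by (intro cINF_lower) (auto simp: A_def B_def)
      also have "\<dots> \<le> d (Inl x) (Inl x0) + d (Inl x0) (Inr y0)"
        using x x0 y0 by (intro tri) (auto simp: A_def B_def)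
      also have "d (Inl x) (Inl x0) = dX x x0" using ad x x0 unfolding admissible_metric_def by blast
      also have "\<dots> = \<bar>f x - f x0\<bar>" using dX x x0 by simp
      also have "\<dots> \<le> 2 * M" using bd[OF x] bd[OF x0] by simp
      finally show "r \<le> 2 * M + d (Inl x0) (Inr y0)" by simp
    qed
    then have "0 \<le> (SUP a\<in>A. INF b\<in>B. d a b)"
      using infnn[of "Inl x0"] x0 by (intro cSUP_upper2[where x = "Inl x0"]) (auto simp: A_def)
    then show ?thesis unfolding s hausdorff_d_def by simp
  qed
  have Sne: "hausdorff_d (D 1) A B \<in> S" unfolding S_def A_def B_def using adm[of 1] by auto
  have upper: "hausdorff_d (D \<delta>) A B \<le> h + \<delta>" if "\<delta> > 0" for \<delta>
  proof -
    have Dnn: "0 \<le> D \<delta> u v" for u v using that by (simp add: D_def)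
    have s1: "(SUP a\<in>A. INF b\<in>B. D \<delta> a b) \<le> h + \<delta>"
    proof (rule cSUP_least)
      show "A \<noteq> {}" using XY by (simp add: A_def)
      fix a assume "a \<in> A"
      then obtain x where x: "x \<in> X" "a = Inl x" by (auto simp: A_def)
      obtain y where y: "y \<in> Y" "\<bar>f x - g y\<bar> \<le> h" using c1[OF x(1)] by blast
      have "(INF b\<in>B. D \<delta> a b) \<le> D \<delta> a (Inr y)"
        using y Dnn by (intro cINF_lower) (auto simp: B_def intro: bdd_belowI[of _ 0])
      also have "\<dots> \<le> h + \<delta>" using x y by (simp add: D_def pos_def)
      finally show "(INF b\<in>B. D \<delta> a b) \<le> h + \<delta>" .
    qed
    have s2: "(SUP b\<in>B. INF a\<in>A. D \<delta> a b) \<le> h + \<delta>"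
    proof (rule cSUP_least)
      show "B \<noteq> {}" using XY by (simp add: B_def)
      fix b assume "b \<in> B"
      then obtain y where y: "y \<in> Y" "b = Inr y" by (auto simp: B_def)
      obtain x where x: "x \<in> X" "\<bar>f x - g y\<bar> \<le> h" using c2[OF y(1)] by blast
      have "(INF a\<in>A. D \<delta> a b) \<le> D \<delta> (Inl x) b"
        using x Dnn by (intro cINF_lower) (auto simp: A_def intro: bdd_belowI[of _ 0])
      also have "\<dots> \<le> h + \<delta>" using x y by (simp add: D_def pos_def)
      finally show "(INF a\<in>A. D \<delta> a b) \<le> h + \<delta>" .
    qed
    show ?thesis using s1 s2 unfolding hausdorff_d_def by simp
  qed
  have bS: "bdd_below S" using nonneg by (intro bdd_belowI[of _ 0]) auto
  have GHeq: "GH_dist X dX Y dY = Inf S" unfolding GH_dist_def S_def ..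
  have "0 \<le> Inf S" using Sne nonneg by (intro cInf_greatest) auto
  moreover have "Inf S \<le> h"
  proof (rule field_le_epsilon)
    fix e :: real assume e: "0 < e"
    have "hausdorff_d (D e) A B \<in> S" unfolding S_def A_def B_def using adm[OF e] by auto
    then have "Inf S \<le> hausdorff_d (D e) A B" using bS by (rule cInf_lower)
    also have "\<dots> \<le> h + e" by (rule upper[OF e])
    finally show "Inf S \<le> h + e" .
  qed
  ultimately show ?thesis using GHeq by simp
qed



definition phi :: "real \<Rightarrow> real \<Rightarrow> real" where
  "phi q x = (if x = 0 then 0 else TT q (qidx q x))"

lemma pow_inj:
  fixes q :: real
  assumes "0 < q" "q < 1" "q ^ (2 * n) = q ^ (2 * m)"
  shows "n = m"
proof (rule ccontr)
  assume "n \<noteq> m"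
  then have "2 * n < 2 * m \<or> 2 * m < 2 * n" by auto
  then show False using assms power_strict_decreasing_iff[OF assms(1,2)] by (metis less_irrefl)
qed

lemma qidx_pow:
  assumes "0 < q" "q < 1"
  shows "qidx q (q ^ (2 * n)) = n"
  unfolding qidx_def
proof (rule the_equality)
  fix m assume "q ^ (2 * n) = q ^ (2 * m)"
  then show "m = n" using pow_inj[OF assms] by simp
qed simp

lemma phi_pow:
  assumes "0 < q" "q < 1"
  shows "phi q (q ^ (2 * n)) = TT q n"
  using assms by (simp add: phi_def qidx_pow)

lemma Xq_cases:
  assumes "x \<in> Xq q"
  obtains "x = 0" | n where "x = q ^ (2 * n)"
  using assms unfolding Xq_def by auto

lemma TT_diff:
  assumes "0 < q" "q < 1" "n < m"
  shows "TT q n - TT q m = (\<Sum>k=n..<m. aa q k)"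
  using TT_split[OF assms(1,2), of n m] assms(3) by simp

lemma dq_eq:
  assumes "0 < q" "q < 1" "x \<in> Xq q" "y \<in> Xq q"
  shows "dq q x y = \<bar>phi q x - phi q y\<bar>"
proof (cases "x = y")
  case True then show ?thesis by (simp add: dq_def)
next
  case ne: False
  have nz: "q ^ (2 * k) \<noteq> 0" for k using assms by simp
  show ?thesis
  proof (cases "y = 0")
    case True
    then obtain n where x: "x = q ^ (2 * n)" using ne assms(3) by (auto elim: Xq_cases)
    have "dq q x y = TT q n" using ne True x
      using assms(1) by (simp add: dq_def qidx_pow[OF assms(1,2)] TT_def aa_def)
    then show ?thesis using True x TT_pos[OF assms(1,2), of n] using assms by (simp add: phi_pow[OF assms(1,2)] phi_def qidx_pow[OF assms(1,2)])
  next
    case y0: False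
    then obtain m where y: "y = q ^ (2 * m)" using assms(4) by (auto elim: Xq_cases)
    show ?thesis
    proof (cases "x = 0")
      case True
      have "dq q x y = TT q m" using ne True y y0
        using assms(1) by (simp add: dq_def qidx_pow[OF assms(1,2)] TT_def aa_def)
      then show ?thesis using True y TT_pos[OF assms(1,2), of m] using assms by (simp add: phi_pow[OF assms(1,2)] phi_def qidx_pow[OF assms(1,2)])
    next
      case x0: False
      then obtain n where x: "x = q ^ (2 * n)" using assms(3) by (auto elim: Xq_cases)
      have nm: "n \<noteq> m" using ne x y by auto
      have d: "dq q x y = (\<Sum>k = min n m..<max n m. aa q k)" using ne x0 y0 x y
        using assms(1) by (simp add: dq_def qidx_pow[OF assms(1,2)] aa_def)
      show ?thesis
      proof (cases "n < m")
        case True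
        have "0 \<le> (\<Sum>k=n..<m. aa q k)" using aa_pos[OF assms(1,2)] by (intro sum_nonneg) (simp add: less_imp_le)
        then show ?thesis using d True TT_diff[OF assms(1,2) True] x y
          by (simp add: phi_pow[OF assms(1,2)])
      next
        case False
        then have True: "m < n" using nm by simp
        have "0 \<le> (\<Sum>k=m..<n. aa q k)" using aa_pos[OF assms(1,2)] by (intro sum_nonneg) (simp add: less_imp_le)
        then show ?thesis using d True TT_diff[OF assms(1,2) True] x y
          by (simp add: phi_pow[OF assms(1,2)])
      qed
    qed
  qed
qed

lemma phi_inj:
  assumes "0 < q" "q < 1"
  shows "inj_on (phi q) (Xq q)"
proof (rule inj_onI)
  fix x y assume x: "x \<in> Xq q" and y: "y \<in> Xq q" and e: "phi q x = phi q y"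
  have tinj: "TT q n = TT q m \<Longrightarrow> n = m" for n m
    using TT_strict[OF assms, of n m] TT_strict[OF assms, of m n] by (cases n m rule: linorder_cases) auto
  show "x = y"
  proof (cases "x = 0")
    case True
    show ?thesis
    proof (cases "y = 0")
      case False
      then obtain m where "y = q ^ (2 * m)" using y by (auto elim: Xq_cases)
      then show ?thesis using e True TT_pos[OF assms, of m] using assms by (simp add: phi_pow[OF assms] phi_def qidx_pow[OF assms])
    qed (use True in simp)
  next
    case False
    then obtain n where xn: "x = q ^ (2 * n)" using x by (auto elim: Xq_cases)
    show ?thesis
    proof (cases "y = 0")
      case True
      then show ?thesis using e xn TT_pos[OF assms, of n] using assms by (simp add: phi_pow[OF assms] phi_def qidx_pow[OF assms])
    next
      case False
      then obtain m where "y = q ^ (2 * m)" using y by (auto elim: Xq_cases)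
      then show ?thesis using e xn tinj[of n m] by (simp add: phi_pow[OF assms])
    qed
  qed
qed

lemma phi_range:
  assumes "0 < q" "q < 1" "x \<in> Xq q"
  shows "0 \<le> phi q x" "phi q x \<le> TT q 0"
proof -
  have "0 \<le> phi q x \<and> phi q x \<le> TT q 0"
  proof (cases "x = 0")
    case True then show ?thesis using TT_pos[OF assms(1,2), of 0] by (simp add: phi_def)
  next
    case False
    then obtain n where "x = q ^ (2 * n)" using assms(3) by (auto elim: Xq_cases)
    then show ?thesis using TT_pos[OF assms(1,2), of n] TT_mono[OF assms(1,2), of 0 n]
      by (simp add: phi_pow[OF assms(1,2)])
  qed
  then show "0 \<le> phi q x" "phi q x \<le> TT q 0" by auto
qed

lemma zero_in_Xq: "0 \<in> Xq q" by (simp add: Xq_def)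
lemma pow_in_Xq: "q ^ (2 * n) \<in> Xq q" by (simp add: Xq_def)



lemma gap:
  assumes q: "0 < q" "q < 1" and t: "0 < t" "t < TT q 0"
  shows "\<exists>n. \<bar>t - TT q n\<bar> \<le> sqrt (1 - q\<^sup>2)"
proof -
  obtain N where N: "q ^ N < t * (1 - q)" using real_arch_pow_inv[of "t * (1 - q)" q] q t by auto
  have "TT q N \<le> q ^ N / (1 - q)" by (rule TT_bound[OF q])
  also have "\<dots> < t" using N q by (simp add: divide_less_eq)
  finally have ex: "TT q N \<le> t" by simp
  define n where "n = (LEAST n. TT q n \<le> t)"
  have n: "TT q n \<le> t" unfolding n_def by (rule LeastI[of _ N]) (rule ex)
  have n0: "n \<noteq> 0"
  proof
    assume "n = 0"
    with n t show False by simp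
  qed
  then obtain k where k: "n = Suc k" by (cases n) auto
  have "\<not> TT q k \<le> t" using not_less_Least[of k "\<lambda>n. TT q n \<le> t"] k unfolding n_def[symmetric] by simp
  then have "t - TT q n < aa q k" using TT_Suc[OF q, of k] k by simp
  then have "\<bar>t - TT q n\<bar> \<le> sqrt (1 - q\<^sup>2)" using aa_le2(2)[OF q, of k] n by simp
  then show ?thesis ..
qed

lemma part2_bound:
  assumes q: "0 < q" "q < 1"
  shows "0 \<le> GH_dist (Xq q) (dq q) {-pi/2..pi/2} (dist :: real \<Rightarrow> real \<Rightarrow> real)
       \<and> GH_dist (Xq q) (dq q) {-pi/2..pi/2} (dist :: real \<Rightarrow> real \<Rightarrow> real)
         \<le> \<bar>TT q 0 - pi\<bar> + sqrt (1 - q\<^sup>2)"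
proof (rule GH_bound[where f = "phi q" and g = "\<lambda>y. y + pi / 2" and M = "TT q 0 + pi"])
  show "Xq q \<noteq> {}" using zero_in_Xq by auto
  show "{-pi/2..pi/2} \<noteq> {}" by (simp add: pi_ge_zero)
  show "dq q x x' = \<bar>phi q x - phi q x'\<bar>" if "x \<in> Xq q" "x' \<in> Xq q" for x x'
    by (rule dq_eq[OF q that])
  show "dist y y' = \<bar>(y + pi / 2) - (y' + pi / 2)\<bar>" for y y' :: real by (simp add: dist_real_def)
  show "inj_on (phi q) (Xq q)" by (rule phi_inj[OF q])
  show "inj_on (\<lambda>y::real. y + pi / 2) {-pi/2..pi/2}" by (simp add: inj_on_def)
  show "\<bar>phi q x\<bar> \<le> TT q 0 + pi" if "x \<in> Xq q" for x
    using phi_range[OF q that] pi_gt_zero abs_of_nonneg[of "phi q x"] by linarith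
  have sq: "0 \<le> sqrt (1 - q\<^sup>2)" using q by (simp add: power_le_one)
  show "\<exists>y\<in>{-pi/2..pi/2}. \<bar>phi q x - (y + pi / 2)\<bar> \<le> \<bar>TT q 0 - pi\<bar> + sqrt (1 - q\<^sup>2)"
    if x: "x \<in> Xq q" for x
  proof (cases "phi q x \<le> pi")
    case True
    show ?thesis
      by (rule bexI[where x = "phi q x - pi / 2"]) (use True phi_range[OF q x] sq in auto)
  next
    case False
    have a1: "\<bar>phi q x - (pi / 2 + pi / 2)\<bar> = phi q x - pi" using False by simp
    have a2: "TT q 0 - pi \<le> \<bar>TT q 0 - pi\<bar>" by simp
    have "\<bar>phi q x - (pi / 2 + pi / 2)\<bar> \<le> \<bar>TT q 0 - pi\<bar> + sqrt (1 - q\<^sup>2)"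
      using a1 a2 phi_range[OF q x] sq by linarith
    then show ?thesis using pi_gt_zero by (intro bexI[where x = "pi / 2"]) auto
  qed
  show "\<exists>x\<in>Xq q. \<bar>phi q x - (y + pi / 2)\<bar> \<le> \<bar>TT q 0 - pi\<bar> + sqrt (1 - q\<^sup>2)"
    if y: "y \<in> {-pi/2..pi/2}" for y
  proof -
    define t where "t = y + pi / 2"
    have t: "0 \<le> t" "t \<le> pi" using y unfolding t_def by auto
    have p1: "phi q (q ^ (2 * n)) = TT q n" for n by (rule phi_pow[OF q])
    have "\<exists>x\<in>Xq q. \<bar>phi q x - t\<bar> \<le> \<bar>TT q 0 - pi\<bar> + sqrt (1 - q\<^sup>2)"
    proof (cases "TT q 0 \<le> t")
      case True
      have "\<bar>phi q (q ^ (2 * 0)) - t\<bar> \<le> \<bar>TT q 0 - pi\<bar> + sqrt (1 - q\<^sup>2)"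
      proof -
        have b1: "\<bar>TT q 0 - t\<bar> = t - TT q 0" using True by simp
        have b2: "pi - TT q 0 \<le> \<bar>TT q 0 - pi\<bar>" by simp
        show ?thesis unfolding p1 using b1 b2 t sq by linarith
      qed
      then show ?thesis using pow_in_Xq[of q 0] by blast
    next
      case False
      show ?thesis
      proof (cases "t = 0")
        case True
        then show ?thesis using zero_in_Xq[of q] sq by (intro bexI[where x = 0]) (auto simp: phi_def)
      next
        case t0: False
        obtain n where "\<bar>t - TT q n\<bar> \<le> sqrt (1 - q\<^sup>2)" using gap[OF q, of t] t t0 False by auto
        then have "\<bar>phi q (q ^ (2 * n)) - t\<bar> \<le> \<bar>TT q 0 - pi\<bar> + sqrt (1 - q\<^sup>2)"
          unfolding p1 by (simp add: abs_minus_commute)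
        then show ?thesis using pow_in_Xq[of q n] by blast
      qed
    qed
    then show ?thesis unfolding t_def .
  qed
qed

definition EE :: "real \<Rightarrow> real \<Rightarrow> nat \<Rightarrow> real" where
  "EE q p N = (\<Sum>k<N. \<bar>aa q k - aa p k\<bar>) + TT q N + TT p N"

lemma EE_sym: "EE q p N = EE p q N"
  unfolding EE_def by (simp add: abs_minus_commute)

lemma cover:
  assumes q: "0 < q" "q < 1" and p: "0 < p" "p < 1" and x: "x \<in> Xq q"
  shows "\<exists>y\<in>Xq p. \<bar>phi q x - phi p y\<bar> \<le> EE q p N"
proof -
  have s0: "0 \<le> (\<Sum>k<N. \<bar>aa q k - aa p k\<bar>)" by (intro sum_nonneg) simp
  have Tq: "0 < TT q N" by (rule TT_pos[OF q])
  have Tp: "0 < TT p N" by (rule TT_pos[OF p])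
  show ?thesis
  proof (cases "x = 0")
    case True
    then show ?thesis using zero_in_Xq[of p] s0 Tq Tp
      by (intro bexI[where x = 0]) (auto simp: phi_def EE_def)
  next
    case False
    then obtain n where xn: "x = q ^ (2 * n)" using x by (auto elim: Xq_cases)
    show ?thesis
    proof (cases "n \<le> N")
      case True
      have e1: "TT q n = (\<Sum>k=n..<N. aa q k) + TT q N" by (rule TT_split[OF q True])
      have e2: "TT p n = (\<Sum>k=n..<N. aa p k) + TT p N" by (rule TT_split[OF p True])
      have "\<bar>TT q n - TT p n\<bar> = \<bar>(\<Sum>k=n..<N. aa q k - aa p k) + (TT q N - TT p N)\<bar>"
        unfolding e1 e2 sum_subtractf by simp
      also have "\<dots> \<le> \<bar>\<Sum>k=n..<N. aa q k - aa p k\<bar> + \<bar>TT q N - TT p N\<bar>" by (rule abs_triangle_ineq)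
      also have "\<bar>\<Sum>k=n..<N. aa q k - aa p k\<bar> \<le> (\<Sum>k=n..<N. \<bar>aa q k - aa p k\<bar>)" by (rule sum_abs)
      also have "\<dots> \<le> (\<Sum>k<N. \<bar>aa q k - aa p k\<bar>)" by (intro sum_mono2) auto
      also have "\<bar>TT q N - TT p N\<bar> \<le> TT q N + TT p N" using Tq Tp by simp
      finally have "\<bar>TT q n - TT p n\<bar> \<le> EE q p N" unfolding EE_def by simp
      then show ?thesis using pow_in_Xq[of p n] xn
        by (intro bexI[where x = "p ^ (2 * n)"]) (simp_all add: phi_pow[OF q] phi_pow[OF p])
    next
      case False
      have "TT q n \<le> TT q N" using False by (intro TT_mono[OF q]) simp
      then have "TT q n \<le> EE q p N" using s0 Tp unfolding EE_def by linarith
      then have "\<bar>TT q n - 0\<bar> \<le> EE q p N" using TT_pos[OF q, of n] by simp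
      moreover have "phi p 0 = 0" by (simp add: phi_def)
      ultimately show ?thesis using zero_in_Xq[of p] xn
        by (intro bexI[where x = 0]) (simp_all add: phi_pow[OF q])
    qed
  qed
qed

lemma part1_bound:
  assumes q: "0 < q" "q < 1" and p: "0 < p" "p < 1"
  shows "0 \<le> GH_dist (Xq q) (dq q) (Xq p) (dq p) \<and> GH_dist (Xq q) (dq q) (Xq p) (dq p) \<le> EE q p N"
proof (rule GH_bound[where f = "phi q" and g = "phi p" and M = "TT q 0 + TT p 0"])
  show "Xq q \<noteq> {}" "Xq p \<noteq> {}" using zero_in_Xq by auto
  show "dq q x x' = \<bar>phi q x - phi q x'\<bar>" if "x \<in> Xq q" "x' \<in> Xq q" for x x'
    by (rule dq_eq[OF q that])
  show "dq p x x' = \<bar>phi p x - phi p x'\<bar>" if "x \<in> Xq p" "x' \<in> Xq p" for x x'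
    by (rule dq_eq[OF p that])
  show "inj_on (phi q) (Xq q)" by (rule phi_inj[OF q])
  show "inj_on (phi p) (Xq p)" by (rule phi_inj[OF p])
  show "\<bar>phi q x\<bar> \<le> TT q 0 + TT p 0" if "x \<in> Xq q" for x
    using phi_range[OF q that] TT_pos[OF p, of 0] by simp
  show "\<exists>y\<in>Xq p. \<bar>phi q x - phi p y\<bar> \<le> EE q p N" if "x \<in> Xq q" for x
    by (rule cover[OF q p that])
  show "\<exists>x\<in>Xq q. \<bar>phi q x - phi p y\<bar> \<le> EE q p N" if "y \<in> Xq p" for y
    using cover[OF p q that, of N] by (auto simp: EE_sym abs_minus_commute)
qed

lemma aa_cont:
  assumes q0: "0 < q0" "q0 < 1"
  shows "((\<lambda>q. aa q k) \<longlongrightarrow> aa q0 k) (at q0)"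
proof -
  have nz: "sqrt (1 - q0 ^ (2 * k + 2)) \<noteq> 0" using sq_pos_aux(1)[OF q0, of k] by simp
  have "((\<lambda>q. (1 - q\<^sup>2) * q ^ k / sqrt (1 - q ^ (2 * k + 2))) \<longlongrightarrow>
          (1 - q0\<^sup>2) * q0 ^ k / sqrt (1 - q0 ^ (2 * k + 2))) (at q0)"
    by (intro tendsto_intros nz)
  then have "((\<lambda>q. (1 - q\<^sup>2) * q ^ k / sqrt (1 - q ^ (2 * k + 2))) \<longlongrightarrow> aa q0 k) (at q0)"
    using aa_eq[OF q0] by simp
  moreover have "eventually (\<lambda>q. q \<in> {0<..<1::real}) (at q0)"
    using q0 by (intro eventually_at_in_open') auto
  then have "eventually (\<lambda>q. (1 - q\<^sup>2) * q ^ k / sqrt (1 - q ^ (2 * k + 2)) = aa q k) (at q0)"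
    by eventually_elim (simp add: aa_eq)
  ultimately show ?thesis by (rule Lim_transform_eventually)
qed

lemma part1_limit:
  assumes q0: "0 < q0" "q0 < 1"
  shows "((\<lambda>q. GH_dist (Xq q) (dq q) (Xq q0) (dq q0)) \<longlongrightarrow> 0) (at q0)"
proof (rule tendstoI)
  fix e :: real assume e: "0 < e"
  define q1 where "q1 = (1 + q0) / 2"
  have q1: "q0 < q1" "q1 < 1" using q0 unfolding q1_def by auto
  obtain N where N: "q1 ^ N < e / 3 * (1 - q1)" using real_arch_pow_inv[of "e / 3 * (1 - q1)" q1] q1 e by auto
  have Tb: "TT q N < e / 3" if "0 < q" "q \<le> q1" for q
  proof -
    have qq: "q < 1" using that q1 by simp
    have "TT q N \<le> q ^ N / (1 - q)" by (rule TT_bound[OF that(1) qq])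
    also have "\<dots> \<le> q1 ^ N / (1 - q1)"
      using that q1 by (intro frac_le power_mono) auto
    also have "\<dots> < e / 3" using N q1 by (simp add: divide_less_eq)
    finally show ?thesis .
  qed
  have lim: "((\<lambda>q. \<Sum>k<N. \<bar>aa q k - aa q0 k\<bar>) \<longlongrightarrow> (\<Sum>k<N. \<bar>aa q0 k - aa q0 k\<bar>)) (at q0)"
    by (intro tendsto_sum tendsto_rabs tendsto_diff aa_cont[OF q0] tendsto_const)
  then have ev1: "eventually (\<lambda>q. (\<Sum>k<N. \<bar>aa q k - aa q0 k\<bar>) < e / 3) (at q0)"
    using e by (intro order_tendstoD(2)[OF lim]) simp
  have ev2: "eventually (\<lambda>q. q \<in> {0<..<q1}) (at q0)"
    using q0 q1 by (intro eventually_at_in_open') auto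
  show "eventually (\<lambda>q. dist (GH_dist (Xq q) (dq q) (Xq q0) (dq q0)) 0 < e) (at q0)"
    using ev1 ev2
  proof eventually_elim
    case (elim q)
    have q: "0 < q" "q < 1" using elim q1 by auto
    have b: "0 \<le> GH_dist (Xq q) (dq q) (Xq q0) (dq q0) \<and> GH_dist (Xq q) (dq q) (Xq q0) (dq q0) \<le> EE q q0 N"
      by (rule part1_bound[OF q q0])
    have "EE q q0 N < e / 3 + e / 3 + e / 3"
      unfolding EE_def using elim Tb[of q] Tb[OF q0(1)] q1 by (intro add_strict_mono) auto
    then show ?case using b by (simp add: dist_real_def)
  qed
qed

lemma part2_limit:
  "((\<lambda>q. GH_dist (Xq q) (dq q) {-pi/2..pi/2} (dist :: real \<Rightarrow> real \<Rightarrow> real)) \<longlongrightarrow> 0) (at_left 1)"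
proof (rule tendsto_sandwich[where f = "\<lambda>_. 0" and h = "\<lambda>q. \<bar>TT q 0 - pi\<bar> + sqrt (1 - q\<^sup>2)"])
  have ev: "eventually (\<lambda>q. 0 < q \<and> q < (1::real)) (at_left 1)"
    by (rule eventually_at_leftI[of "0"]) auto
  show "eventually (\<lambda>q. 0 \<le> GH_dist (Xq q) (dq q) {-pi/2..pi/2} (dist :: real \<Rightarrow> real \<Rightarrow> real)) (at_left 1)"
    using ev by eventually_elim (use part2_bound in blast)
  show "eventually (\<lambda>q. GH_dist (Xq q) (dq q) {-pi/2..pi/2} (dist :: real \<Rightarrow> real \<Rightarrow> real)
          \<le> \<bar>TT q 0 - pi\<bar> + sqrt (1 - q\<^sup>2)) (at_left 1)"
    using ev by eventually_elim (use part2_bound in blast)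
  show "((\<lambda>_. 0::real) \<longlongrightarrow> 0) (at_left 1)" by simp
  have "((\<lambda>q. \<bar>TT q 0 - pi\<bar> + sqrt (1 - q\<^sup>2)) \<longlongrightarrow> \<bar>pi - pi\<bar> + sqrt (1 - 1\<^sup>2)) (at_left (1::real))"
    by (intro tendsto_intros TT0_limit)
  then show "((\<lambda>q. \<bar>TT q 0 - pi\<bar> + sqrt (1 - q\<^sup>2)) \<longlongrightarrow> 0) (at_left (1::real))" by simp
qed

theorem theoremB:
  shows "(\<forall>q0\<in>{0<..<1::real}.
            ((\<lambda>q. GH_dist (Xq q) (dq q) (Xq q0) (dq q0)) \<longlongrightarrow> 0) (at q0))
       \<and> ((\<lambda>q. GH_dist (Xq q) (dq q) {-pi/2..pi/2} (dist :: real \<Rightarrow> real \<Rightarrow> real))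
            \<longlongrightarrow> 0) (at_left 1)"
  using part1_limit part2_limit by auto

end
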